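(* Suppose $\sigma$ is an automorphism of $D$ and $f(t)=t^m-a\in D[t;\sigma]$ with $a\in D$. Then $f$ has a left divisor of degree $1$ if and only if it has a right divisor of degree $1$.
   Context: $D$ is an associative division ring, $\sigma$ a ring automorphism of $D$, and $D[t;\sigma]$ the skew polynomial ring with $ta=\sigma(a)t$. A left (resp. right) divisor $g$ of $f$ means $f=gq$ (resp. $f=qg$) for some $q\in D[t;\sigma]$. *)

theory Defs
  imports "HOL-Computational_Algebra.Polynomial"
begin

text \<open>Skew polynomials in D[t;sigma] are represented by their coefficient sequences,
  using the type 'a poly (finitely supported coefficients, with degree); only the
  multiplication differs from the commutative one: t a = sigma(a) t, so
  (sum a_i t^i)(sum b_j t^j) has k-th coefficient sum_{i<=k} a_i sigma^i(b_{k-i}).\<close>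

definition ring_automorphism :: "('a::division_ring \<Rightarrow> 'a) \<Rightarrow> bool" where
  "ring_automorphism \<sigma> \<longleftrightarrow> bij \<sigma> \<and> (\<forall>x y. \<sigma> (x + y) = \<sigma> x + \<sigma> y)
     \<and> (\<forall>x y. \<sigma> (x * y) = \<sigma> x * \<sigma> y) \<and> \<sigma> 1 = 1"

definition skew_mult_coeff :: "('a::division_ring \<Rightarrow> 'a) \<Rightarrow> 'a poly \<Rightarrow> 'a poly \<Rightarrow> nat \<Rightarrow> 'a" where
  "skew_mult_coeff \<sigma> p q k = (\<Sum>i\<le>k. coeff p i * (\<sigma> ^^ i) (coeff q (k - i)))"

definition skew_left_dvd :: "('a::division_ring \<Rightarrow> 'a) \<Rightarrow> 'a poly \<Rightarrow> 'a poly \<Rightarrow> bool" where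
  "skew_left_dvd \<sigma> g f \<longleftrightarrow> (\<exists>q. \<forall>k. coeff f k = skew_mult_coeff \<sigma> g q k)"

definition skew_right_dvd :: "('a::division_ring \<Rightarrow> 'a) \<Rightarrow> 'a poly \<Rightarrow> 'a poly \<Rightarrow> bool" where
  "skew_right_dvd \<sigma> g f \<longleftrightarrow> (\<exists>q. \<forall>k. coeff f k = skew_mult_coeff \<sigma> q g k)"

end

theory Submission
  imports Defs
begin

lemma aut_basic:
  assumes "ring_automorphism \<sigma>"
  shows "\<sigma> (x+y) = \<sigma> x + \<sigma> y" "\<sigma> (x*y) = \<sigma> x * \<sigma> y" "\<sigma> 1 = 1"
    "\<sigma> 0 = 0" "\<sigma> (-x) = - \<sigma> x" "inj \<sigma>" "surj \<sigma>"
proof -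
  show a: "\<sigma> (x+y) = \<sigma> x + \<sigma> y" "\<sigma> (x*y) = \<sigma> x * \<sigma> y" "\<sigma> 1 = 1" "inj \<sigma>" "surj \<sigma>"
    using assms unfolding ring_automorphism_def bij_def by auto
  have "\<sigma> (0+0) = \<sigma> 0 + \<sigma> 0" using assms unfolding ring_automorphism_def by blast
  then show z: "\<sigma> 0 = 0" by simp
  have "\<sigma> (x + -x) = \<sigma> x + \<sigma> (-x)" using assms unfolding ring_automorphism_def by blast
  then have "\<sigma> x + \<sigma> (-x) = 0" using z by simp
  then show "\<sigma> (-x) = - \<sigma> x" by (simp add: add_eq_0_iff2)
qed

lemma aut_funpow:
  assumes "ring_automorphism \<sigma>"
  shows "ring_automorphism (\<sigma>^^n)"
proof -
  have "bij (\<sigma>^^n)" using bij_betw_funpow[of \<sigma> UNIV n] assms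
    unfolding ring_automorphism_def by simp
  moreover have "(\<forall>x y. (\<sigma>^^n) (x + y) = (\<sigma>^^n) x + (\<sigma>^^n) y)
     \<and> (\<forall>x y. (\<sigma>^^n) (x * y) = (\<sigma>^^n) x * (\<sigma>^^n) y) \<and> (\<sigma>^^n) 1 = 1"
    by (induction n) (auto simp: aut_basic[OF assms])
  ultimately show ?thesis unfolding ring_automorphism_def by blast
qed

lemma aut_zero_iff:
  assumes "ring_automorphism \<sigma>"
  shows "\<sigma> x = 0 \<longleftrightarrow> x = 0"
  using aut_basic[OF assms] by (metis injD)

fun rp :: "('a::division_ring \<Rightarrow> 'a) \<Rightarrow> 'a \<Rightarrow> nat \<Rightarrow> nat \<Rightarrow> 'a" where
  "rp \<sigma> c lo 0 = 1"
| "rp \<sigma> c lo (Suc n) = (\<sigma>^^(lo+n)) c * rp \<sigma> c lo n"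

lemma rp_low: "rp \<sigma> c lo (Suc n) = rp \<sigma> c (Suc lo) n * (\<sigma>^^lo) c"
  by (induction n) (simp_all add: mult.assoc)

lemma rp_shift:
  assumes "ring_automorphism \<sigma>"
  shows "\<sigma> (rp \<sigma> c lo n) = rp \<sigma> c (Suc lo) n"
  by (induction n) (simp_all add: aut_basic[OF assms])

lemma left_expand:
  assumes "degree g = 1"
  shows "skew_mult_coeff \<sigma> g q k = (if k = 0 then coeff g 0 * coeff q 0
           else coeff g 0 * coeff q k + coeff g 1 * \<sigma> (coeff q (k-1)))"
proof (cases k)
  case 0 then show ?thesis by (simp add: skew_mult_coeff_def)
next
  case (Suc k')
  have z: "coeff g (Suc (Suc i)) = 0" for i using assms by (simp add: coeff_eq_0)
  show ?thesis
  proof (cases k')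
    case 0 then show ?thesis using Suc by (simp add: skew_mult_coeff_def)
  next
    case (Suc k'')
    then show ?thesis using \<open>k = Suc k'\<close> z
      by (simp add: skew_mult_coeff_def sum.atMost_Suc_shift del: sum.atMost_Suc)
  qed
qed

lemma right_expand:
  assumes "degree g = 1" "ring_automorphism \<sigma>"
  shows "skew_mult_coeff \<sigma> q g k = (if k = 0 then coeff q 0 * coeff g 0
           else coeff q k * (\<sigma>^^k) (coeff g 0) + coeff q (k-1) * (\<sigma>^^(k-1)) (coeff g 1))"
proof (cases k)
  case 0 then show ?thesis by (simp add: skew_mult_coeff_def)
next
  case (Suc k')
  show ?thesis
  proof (cases k')
    case 0 then show ?thesis using Suc by (simp add: skew_mult_coeff_def)
  next
    case (Suc k'')
    have "(\<Sum>i\<le>k''. coeff q i * (\<sigma>^^i) (coeff g (k - i))) = 0"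
    proof (rule sum.neutral, intro ballI)
      fix i assume "i \<in> {..k''}"
      then have "coeff g (k - i) = 0" using assms(1) \<open>k = Suc k'\<close> Suc by (simp add: coeff_eq_0)
      then show "coeff q i * (\<sigma>^^i) (coeff g (k - i)) = 0"
        using aut_basic(4)[OF aut_funpow[OF assms(2)]] by simp
    qed
    then show ?thesis using \<open>k = Suc k'\<close> Suc
      by (simp add: skew_mult_coeff_def)
  qed
qed

lemma coeff_f: "coeff (monom 1 m - [:a:]) k = (if k = m then 1 else 0) - (if k = 0 then a else 0)"
  by (simp add: coeff_monom coeff_pCons split: nat.split)

lemma coeff_sum_monom: "coeff (\<Sum>k<m. monom (h k) k) j = (if j < m then h j else 0)"
  by (simp add: coeff_sum coeff_monom)


lemma down_gen:
  assumes "\<And>j. M \<le> j \<Longrightarrow> coeff q (Suc j) = 0 \<Longrightarrow> coeff q j = 0"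
  shows "\<forall>j\<ge>M. coeff q j = 0"
proof -
  have "\<forall>j. M \<le> j \<longrightarrow> degree q < j + n \<longrightarrow> coeff q j = 0" for n
  proof (induction n)
    case 0 then show ?case by (simp add: coeff_eq_0)
  next
    case (Suc n)
    show ?case
    proof (intro allI impI)
      fix j assume j: "M \<le> j" "degree q < j + Suc n"
      have "coeff q (Suc j) = 0" using Suc j by simp
      then show "coeff q j = 0" using assms j(1) by blast
    qed
  qed
  then show ?thesis by (metis less_add_Suc2 add_Suc_right)
qed

lemma down_left:
  assumes aut: "ring_automorphism \<sigma>" and g1: "g1 \<noteq> 0"
    and eq: "\<forall>k>M. g0 * coeff q k + g1 * \<sigma> (coeff q (k-1)) = 0"
  shows "\<forall>j\<ge>M. coeff q j = 0"
proof (rule down_gen)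
  fix j assume "M \<le> j" "coeff q (Suc j) = 0"
  then have "g1 * \<sigma> (coeff q j) = 0" using eq[rule_format, of "Suc j"] by simp
  then show "coeff q j = 0" using g1 aut_zero_iff[OF aut] by simp
qed

lemma down_right:
  assumes aut: "ring_automorphism \<sigma>" and g1: "g1 \<noteq> 0"
    and eq: "\<forall>k>M. coeff q k * (\<sigma>^^k) g0 + coeff q (k-1) * (\<sigma>^^(k-1)) g1 = 0"
  shows "\<forall>j\<ge>M. coeff q j = 0"
proof (rule down_gen)
  fix j assume "M \<le> j" "coeff q (Suc j) = 0"
  then have "coeff q j * (\<sigma>^^j) g1 = 0" using eq[rule_format, of "Suc j"] by simp
  then show "coeff q j = 0" using g1 aut_zero_iff[OF aut_funpow[OF aut]] by simp
qed

lemma deg1_lead: "degree (g::'a::division_ring poly) = 1 \<Longrightarrow> coeff g 1 \<noteq> 0"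
  proof -
  assume d: "degree g = 1"
  then have "g \<noteq> 0" by auto
  then have "coeff g (degree g) \<noteq> 0" by simp
  then show ?thesis using d by simp
qed


lemma left_char:
  fixes \<sigma> :: "'a::division_ring \<Rightarrow> 'a"
  assumes aut: "ring_automorphism \<sigma>" and m: "m \<noteq> 0"
  shows "(\<exists>g. degree g = 1 \<and> skew_left_dvd \<sigma> g (monom 1 m - [:a:]))
     \<longleftrightarrow> (\<exists>c. a = rp \<sigma> c 0 m)"
proof
  assume "\<exists>c. a = rp \<sigma> c 0 m"
  then obtain c where a: "a = rp \<sigma> c 0 m" by blast
  define b where "b = (\<sigma>^^(m-1)) c"
  define g where "g = [:-b, 1:]"
  define q where "q = (\<Sum>k<m. monom (rp \<sigma> c k (m-1-k)) k)"
  have dg: "degree g = 1" by (simp add: g_def)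
  have cq: "coeff q j = (if j < m then rp \<sigma> c j (m-1-j) else 0)" for j
    unfolding q_def by (rule coeff_sum_monom)
  have am: "a = b * rp \<sigma> c 0 (m-1)"
    using a m unfolding b_def by (metis Suc_pred' add_0 bot_nat_0.not_eq_extremum rp.simps(2))
  have "coeff (monom 1 m - [:a:]) k = skew_mult_coeff \<sigma> g q k" for k
  proof -
    consider "k = 0" | "0 < k" "k < m" | "k = m" | "m < k" by linarith
    then show ?thesis
    proof cases
      case 1 then show ?thesis using m am unfolding left_expand[OF dg] coeff_f by (simp add: cq g_def)
    next
      case 2
      have e1: "\<sigma> (rp \<sigma> c (k-1) (m-1-(k-1))) = rp \<sigma> c k (m-k)"
        using rp_shift[OF aut] 2 by (metis Suc_diff_1 diff_Suc_eq_diff_pred)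
      have e2: "rp \<sigma> c k (m-k) = b * rp \<sigma> c k (m-1-k)"
      proof -
        have "m - k = Suc (m-1-k)" using 2 by simp
        moreover have "k + (m-1-k) = m-1" using 2 by simp
        ultimately show ?thesis unfolding b_def by simp
      qed
      have "k - 1 < m" using 2 by simp
      then show ?thesis using 2 e1 e2 unfolding left_expand[OF dg] coeff_f by (simp add: cq g_def)
    next
      case 3 then show ?thesis using m aut_basic(3)[OF aut]
        unfolding left_expand[OF dg] coeff_f by (simp add: cq g_def)
    next
      case 4
      have "\<not> k - 1 < m" using 4 by simp
      then show ?thesis using 4 m aut_basic(4)[OF aut]
        unfolding left_expand[OF dg] coeff_f by (simp add: cq g_def)
    qed
  qed
  then show "\<exists>g. degree g = 1 \<and> skew_left_dvd \<sigma> g (monom 1 m - [:a:])"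
    using dg unfolding skew_left_dvd_def by blast
next
  assume "\<exists>g. degree g = 1 \<and> skew_left_dvd \<sigma> g (monom 1 m - [:a:])"
  then obtain g q where dg: "degree g = 1"
    and eq0: "\<And>k. coeff (monom 1 m - [:a:]) k = skew_mult_coeff \<sigma> g q k"
    unfolding skew_left_dvd_def by blast
  define g0 where "g0 = coeff g 0"
  define g1 where "g1 = coeff g 1"
  have g1: "g1 \<noteq> 0" unfolding g1_def using deg1_lead[OF dg] .
  have eq: "\<And>k. coeff (monom 1 m - [:a:]) k = (if k = 0 then g0 * coeff q 0
           else g0 * coeff q k + g1 * \<sigma> (coeff q (k-1)))"
    using eq0 left_expand[OF dg] unfolding g0_def g1_def by simp
  have "\<forall>k>m. g0 * coeff q k + g1 * \<sigma> (coeff q (k-1)) = 0"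
  proof (intro allI impI)
    fix k assume "m < k"
    then show "g0 * coeff q k + g1 * \<sigma> (coeff q (k-1)) = 0"
      using eq[of k] unfolding coeff_f by simp
  qed
  then have qz: "\<forall>j\<ge>m. coeff q j = 0" using down_left[OF aut g1] by blast
  obtain d where d: "\<sigma> d = g1" using aut_basic(7)[OF aut] by (metis surjD)
  have d0: "d \<noteq> 0" using d g1 aut_basic(4)[OF aut] by auto
  define b where "b = - (g0 * inverse d)"
  have g0b: "g0 = - b * d" unfolding b_def using d0 by (simp add: mult.assoc)
  define w where "w k = d * coeff q k" for k
  have sw: "\<sigma> (w k) = g1 * \<sigma> (coeff q k)" for k unfolding w_def using d aut_basic(2)[OF aut] by simp
  obtain c where c: "(\<sigma>^^(m-1)) c = b"
    using aut_basic(7)[OF aut_funpow[OF aut]] by (metis surjD)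
  have ind: "n \<le> m-1 \<longrightarrow> w (m-1-n) = rp \<sigma> c (m-1-n) n" for n
  proof (induction n)
    case 0
    have "1 = g0 * coeff q m + g1 * \<sigma> (coeff q (m-1))" using eq[of m] m unfolding coeff_f by simp
    then have "\<sigma> (w (m-1)) = \<sigma> 1" using qz sw aut_basic(3)[OF aut] by simp
    then show ?case using aut_basic(6)[OF aut] by (simp add: inj_eq)
  next
    case (Suc n)
    show ?case
    proof
      assume n: "Suc n \<le> m-1"
      define k where "k = m-1-n"
      have k: "0 < k" "k < m" "k - 1 = m - 1 - Suc n" "k + n = m-1" "Suc (k-1) = k"
        using n m unfolding k_def by auto
      have IH: "w k = rp \<sigma> c k n" using Suc.IH n unfolding k_def by simp
      have "0 = g0 * coeff q k + g1 * \<sigma> (coeff q (k-1))" using eq[of k] k unfolding coeff_f by simp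
      then have "\<sigma> (w (k-1)) = b * w k" unfolding g0b w_def
        by (simp add: mult.assoc add_eq_0_iff2 eq_neg_iff_add_eq_0 aut_basic(2)[OF aut] d)
      also have "\<dots> = rp \<sigma> c k (Suc n)" using IH c k by simp
      also have "\<dots> = \<sigma> (rp \<sigma> c (k-1) (Suc n))" by (metis rp_shift[OF aut] k(5))
      finally have "w (k-1) = rp \<sigma> c (k-1) (Suc n)" using aut_basic(6)[OF aut] by (simp add: inj_eq)
      then show "w (m - 1 - Suc n) = rp \<sigma> c (m - 1 - Suc n) (Suc n)" using k(3) by metis
    qed
  qed
  have w0: "w 0 = rp \<sigma> c 0 (m-1)" using ind[of "m-1"] by simp
  have "- a = g0 * coeff q 0" using eq[of 0] m unfolding coeff_f by simp
  then have "a = b * w 0" unfolding g0b w_def by (simp add: mult.assoc minus_equation_iff)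
  also have "\<dots> = rp \<sigma> c 0 m" using w0 c m by (metis Suc_pred' add_0 bot_nat_0.not_eq_extremum rp.simps(2))
  finally show "\<exists>c. a = rp \<sigma> c 0 m" by blast
qed


lemma right_char:
  fixes \<sigma> :: "'a::division_ring \<Rightarrow> 'a"
  assumes aut: "ring_automorphism \<sigma>" and m: "m \<noteq> 0"
  shows "(\<exists>g. degree g = 1 \<and> skew_right_dvd \<sigma> g (monom 1 m - [:a:]))
     \<longleftrightarrow> (\<exists>c. a = rp \<sigma> c 0 m)"
proof
  assume "\<exists>c. a = rp \<sigma> c 0 m"
  then obtain c where a: "a = rp \<sigma> c 0 m" by blast
  define g where "g = [:-c, 1:]"
  define q where "q = (\<Sum>k<m. monom (rp \<sigma> c (Suc k) (m-1-k)) k)"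
  have dg: "degree g = 1" by (simp add: g_def)
  have cq: "coeff q j = (if j < m then rp \<sigma> c (Suc j) (m-1-j) else 0)" for j
    unfolding q_def by (rule coeff_sum_monom)
  have fa: "(\<sigma>^^k) (-x) = - (\<sigma>^^k) x" "(\<sigma>^^k) 1 = 1" "(\<sigma>^^k) 0 = 0" for k x
    using aut_basic[OF aut_funpow[OF aut]] by auto
  have am: "a = rp \<sigma> c 1 (m-1) * c"
    using a m rp_low[of \<sigma> c 0 "m-1"] by simp
  have "coeff (monom 1 m - [:a:]) k = skew_mult_coeff \<sigma> q g k" for k
  proof -
    consider "k = 0" | "0 < k" "k < m" | "k = m" | "m < k" by linarith
    then show ?thesis
    proof cases
      case 1 then show ?thesis using m am unfolding right_expand[OF dg aut] coeff_f by (simp add: cq g_def)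
    next
      case 2
      have e2: "rp \<sigma> c (k-1+1) (m-1-(k-1)) = rp \<sigma> c (Suc k) (m-1-k) * (\<sigma>^^k) c"
      proof -
        have "m-1-(k-1) = Suc (m-1-k)" "k-1+1 = k" using 2 by auto
        then show ?thesis by (simp only: rp_low)
      qed
      have "k - 1 < m" using 2 by simp
      then show ?thesis using 2 e2 unfolding right_expand[OF dg aut] coeff_f by (simp add: cq g_def fa)
    next
      case 3 then show ?thesis using m unfolding right_expand[OF dg aut] coeff_f by (simp add: cq g_def fa)
    next
      case 4
      have "\<not> k - 1 < m" using 4 by simp
      then show ?thesis using 4 m unfolding right_expand[OF dg aut] coeff_f by (simp add: cq g_def fa)
    qed
  qed
  then show "\<exists>g. degree g = 1 \<and> skew_right_dvd \<sigma> g (monom 1 m - [:a:])"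
    using dg unfolding skew_right_dvd_def by blast
next
  assume "\<exists>g. degree g = 1 \<and> skew_right_dvd \<sigma> g (monom 1 m - [:a:])"
  then obtain g q where dg: "degree g = 1"
    and eq0: "\<And>k. coeff (monom 1 m - [:a:]) k = skew_mult_coeff \<sigma> q g k"
    unfolding skew_right_dvd_def by blast
  define g0 where "g0 = coeff g 0"
  define g1 where "g1 = coeff g 1"
  have g1: "g1 \<noteq> 0" unfolding g1_def using deg1_lead[OF dg] .
  have eq: "\<And>k. coeff (monom 1 m - [:a:]) k = (if k = 0 then coeff q 0 * g0
           else coeff q k * (\<sigma>^^k) g0 + coeff q (k-1) * (\<sigma>^^(k-1)) g1)"
    using eq0 right_expand[OF dg aut] unfolding g0_def g1_def by simp
  have "\<forall>k>m. coeff q k * (\<sigma>^^k) g0 + coeff q (k-1) * (\<sigma>^^(k-1)) g1 = 0"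
  proof (intro allI impI)
    fix k assume "m < k"
    then show "coeff q k * (\<sigma>^^k) g0 + coeff q (k-1) * (\<sigma>^^(k-1)) g1 = 0"
      using eq[of k] unfolding coeff_f by simp
  qed
  then have qz: "\<forall>j\<ge>m. coeff q j = 0" using down_right[OF aut g1] by blast
  define c where "c = - (inverse g1 * g0)"
  define u where "u k = coeff q k * (\<sigma>^^k) g1" for k
  have key: "coeff q k * (\<sigma>^^k) g0 = - (u k * (\<sigma>^^k) c)" for k
  proof -
    have h1: "g1 * (inverse g1 * g0) = g0" using g1 by (simp add: mult.assoc[symmetric])
    have h2: "(\<sigma>^^k) (g1 * (inverse g1 * g0)) = (\<sigma>^^k) g1 * (\<sigma>^^k) (inverse g1 * g0)"
      by (rule aut_basic(2)[OF aut_funpow[OF aut]])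
    have "(\<sigma>^^k) g1 * (\<sigma>^^k) (inverse g1 * g0) = (\<sigma>^^k) g0" using h2 unfolding h1 by simp
    moreover have "(\<sigma>^^k) c = - (\<sigma>^^k) (inverse g1 * g0)"
      unfolding c_def by (rule aut_basic(5)[OF aut_funpow[OF aut]])
    ultimately show ?thesis unfolding u_def by (simp add: mult.assoc)
  qed
  have ind: "n \<le> m-1 \<longrightarrow> u (m-1-n) = rp \<sigma> c (m-n) n" for n
  proof (induction n)
    case 0
    have "1 = coeff q m * (\<sigma>^^m) g0 + coeff q (m-1) * (\<sigma>^^(m-1)) g1"
      using eq[of m] m unfolding coeff_f by simp
    then show ?case using qz unfolding u_def by simp
  next
    case (Suc n)
    show ?case
    proof
      assume n: "Suc n \<le> m-1"
      define k where "k = m-1-n"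
      have k: "0 < k" "k < m" "k - 1 = m - 1 - Suc n" "Suc k = m - n" "m - Suc n = k"
        using n m unfolding k_def by auto
      have "u (m-1-n) = rp \<sigma> c (m-n) n" using Suc.IH n by simp
      then have IH: "u k = rp \<sigma> c (Suc k) n" by (simp only: k_def[symmetric] k(4)[symmetric])
      have "0 = coeff q k * (\<sigma>^^k) g0 + coeff q (k-1) * (\<sigma>^^(k-1)) g1"
        using eq[of k] k unfolding coeff_f by simp
      then have "u (k-1) = u k * (\<sigma>^^k) c" unfolding key unfolding u_def
        by (simp add: add_eq_0_iff2 eq_neg_iff_add_eq_0)
      also have "\<dots> = rp \<sigma> c k (Suc n)" using IH rp_low[of \<sigma> c k n] by simp
      finally show "u (m - 1 - Suc n) = rp \<sigma> c (m - Suc n) (Suc n)" unfolding k(3)[symmetric] k(5) .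
    qed
  qed
  have u0: "u 0 = rp \<sigma> c 1 (m-1)" using ind[of "m-1"] m by simp
  have "- a = coeff q 0 * g0" using eq[of 0] m unfolding coeff_f by simp
  also have "\<dots> = - (u 0 * c)" using key[of 0] by simp
  finally have "a = u 0 * c" by simp
  also have "\<dots> = rp \<sigma> c 0 m" using u0 m rp_low[of \<sigma> c 0 "m-1"] by simp
  finally show "\<exists>c. a = rp \<sigma> c 0 m" by blast
qed


theorem mainTheorem13:
  fixes \<sigma> :: "'a::division_ring \<Rightarrow> 'a" and a :: 'a and m :: nat
  assumes "ring_automorphism \<sigma>"
  shows "(\<exists>g. degree g = 1 \<and> skew_left_dvd \<sigma> g (monom 1 m - [:a:]))
     \<longleftrightarrow> (\<exists>g. degree g = 1 \<and> skew_right_dvd \<sigma> g (monom 1 m - [:a:]))"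
proof (cases "m = 0")
  case False
  then show ?thesis using left_char[OF assms False] right_char[OF assms False] by simp
next
  case m: True
  note aut = assms
  show ?thesis
  proof (cases "a = 1")
    case True
    have f0: "coeff (monom 1 m - [:a:]) k = 0" for k using m True unfolding coeff_f by simp
    have z: "skew_mult_coeff \<sigma> p 0 k = 0" "skew_mult_coeff \<sigma> 0 p k = 0" for p k
      unfolding skew_mult_coeff_def using aut_basic(4)[OF aut_funpow[OF aut]] by simp_all
    have d: "degree [:0, 1::'a:] = 1" by simp
    show ?thesis using f0 z d unfolding skew_left_dvd_def skew_right_dvd_def by metis
  next
    case False
    have nl: "\<not> skew_left_dvd \<sigma> g (monom 1 m - [:a:])" if dg: "degree g = 1" for g
    proof
      assume "skew_left_dvd \<sigma> g (monom 1 m - [:a:])"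
      then obtain q where eq0: "\<And>k. coeff (monom 1 m - [:a:]) k = skew_mult_coeff \<sigma> g q k"
        unfolding skew_left_dvd_def by blast
      have "\<forall>k>0. coeff g 0 * coeff q k + coeff g 1 * \<sigma> (coeff q (k-1)) = 0"
      proof (intro allI impI)
        fix k :: nat assume "0 < k"
        then show "coeff g 0 * coeff q k + coeff g 1 * \<sigma> (coeff q (k-1)) = 0"
          using eq0[of k] m unfolding left_expand[OF dg] coeff_f by simp
      qed
      then have "\<forall>j\<ge>0. coeff q j = 0" using down_left[OF aut deg1_lead[OF dg]] by blast
      then show False using eq0[of 0] m False unfolding left_expand[OF dg] coeff_f by simp
    qed
    have nr: "\<not> skew_right_dvd \<sigma> g (monom 1 m - [:a:])" if dg: "degree g = 1" for g
    proof
      assume "skew_right_dvd \<sigma> g (monom 1 m - [:a:])"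
      then obtain q where eq0: "\<And>k. coeff (monom 1 m - [:a:]) k = skew_mult_coeff \<sigma> q g k"
        unfolding skew_right_dvd_def by blast
      have "\<forall>k>0. coeff q k * (\<sigma>^^k) (coeff g 0) + coeff q (k-1) * (\<sigma>^^(k-1)) (coeff g 1) = 0"
      proof (intro allI impI)
        fix k :: nat assume "0 < k"
        then show "coeff q k * (\<sigma>^^k) (coeff g 0) + coeff q (k-1) * (\<sigma>^^(k-1)) (coeff g 1) = 0"
          using eq0[of k] m unfolding right_expand[OF dg aut] coeff_f by simp
      qed
      then have "\<forall>j\<ge>0. coeff q j = 0" using down_right[OF aut deg1_lead[OF dg]] by blast
      then show False using eq0[of 0] m False unfolding right_expand[OF dg aut] coeff_f by simp
    qed
    show ?thesis using nl nr by blast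
  qed
qed

end
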